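(* Let $M\ge 2$ be an even integer, $N=2M+3$ (so $N=4n+3$ with $n\ge1$), and $s\in\mathbb{R}$. Let $H=H^N(s)=(h_1,\dots,h_N)$ be the Fibonacci-polynomial Huffman array defined in the context. Then its aperiodic auto-correlation $A_d=\sum_{i} h_i h_{i+d}$ (with $h_k=0$ for $k\notin\{1,\dots,N\}$), for $-(N-1)\le d\le N-1$, satisfies $A_d=0$ for all $0<|d|<N-1$, and $A_{N-1}=A_{-(N-1)}=-1$. That is, the auto-correlation is $[-1,0,\dots,0,A_0,0,\dots,0,-1]$.
   Context: Fibonacci polynomials: $F_0(s)=0$, $F_1(s)=1$, $F_{r+2}(s)=sF_{r+1}(s)+F_r(s)$ for all integers $r$ (extended to negative indices by the same recursion, so that $F_{-j}(s)=(-1)^{j+1}F_j(s)$). Write $F_j=F_j(s)$. For even $M\ge2$ and $N=2M+3$, the array $H^N(s)=(h_1,\dots,h_N)$ is defined by: $h_1=1$; $h_{1+j}=2sF_j$ for $j=1,\dots,M$; middle element $h_{M+2}=sF_{M+1}-2F_M$; $h_{M+2+j}=2sF_{-(M+1-j)}$ for $j=1,\dots,M$; $h_N=-1$. Equivalently $H^N(s)=2s\,[(2s)^{-1},F_1,\dots,F_M,F_{M+1}/2-F_M/s,F_{-M},\dots,F_{-1},-(2s)^{-1}]$. (E.g. for $s=1$, $M=6$: $[1,2,2,4,6,10,16,-3,-16,10,-6,4,-2,2,-1]$.) *)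

theory Defs
  imports Complex_Main
begin

fun fibn :: "real \<Rightarrow> nat \<Rightarrow> real" where
  "fibn s 0 = 0"
| "fibn s (Suc 0) = 1"
| "fibn s (Suc (Suc r)) = s * fibn s (Suc r) + fibn s r"

text \<open>Extension to all integer indices by the same recursion: F_(-j) = (-1)^(j+1) F_j.\<close>
definition fibp :: "real \<Rightarrow> int \<Rightarrow> real" where
  "fibp s r = (if r \<ge> 0 then fibn s (nat r) else (-1) ^ (nat (-r) + 1) * fibn s (nat (-r)))"

definition huff :: "nat \<Rightarrow> real \<Rightarrow> int \<Rightarrow> real" where
  "huff M s k =
    (let m = int M; N = 2 * m + 3 in
     if k = 1 then 1
     else if 2 \<le> k \<and> k \<le> m + 1 then 2 * s * fibp s (k - 1)
     else if k = m + 2 then s * fibp s (m + 1) - 2 * fibp s m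
     else if m + 3 \<le> k \<and> k \<le> 2 * m + 2 then 2 * s * fibp s (-(m + 1 - (k - m - 2)))
     else if k = N then -1
     else 0)"

definition autocorr :: "(int \<Rightarrow> real) \<Rightarrow> int \<Rightarrow> int \<Rightarrow> real" where
  "autocorr h N d = (\<Sum>i = 1..N. h i * h (i + d))"

end

theory Submission imports Defs "HOL-Computational_Algebra.Polynomial" begin

lemma fibp_nat: "fibp s (int j) = fibn s j" by (simp add: fibp_def)
lemma fibp_neg: "fibp s (- int j) = (-1)^(j+1) * fibn s j"
  by (cases j) (auto simp: fibp_def simp flip: of_nat_Suc)

lemma fibp_rec: "fibp s (r + 2) = s * fibp s (r + 1) + fibp s r"
proof (cases "r \<ge> 0")
  case True
  then obtain j where j: "r = int j" by (metis nonneg_eq_int)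
  have "r + 2 = int (Suc (Suc j))" "r + 1 = int (Suc j)" using j by auto
  then show ?thesis using j by (simp only: fibp_nat) simp
next
  case False
  show ?thesis
  proof (cases "r = -1")
    case True then show ?thesis by (simp add: fibp_def)
  next
    case False
    define j where "j = nat (-r) - 2"
    have j: "r = - int (Suc (Suc j))" using False \<open>\<not> r \<ge> 0\<close> unfolding j_def by auto
    have a: "r + 2 = - int j" "r + 1 = - int (Suc j)" using j by auto
    have e1: "fibp s (r+2) = (-1)^(j+1)*fibn s j" by (simp only: a fibp_neg)
    have e2: "fibp s (r+1) = (-1)^(Suc j+1)*fibn s (Suc j)" by (simp only: a fibp_neg)
    have e3: "fibp s r = (-1)^(Suc (Suc j)+1) * fibn s (Suc(Suc j))" by (simp only: j fibp_neg)
    show ?thesis unfolding e1 e2 e3 by (simp add: algebra_simps)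
  qed
qed

definition hh :: "nat \<Rightarrow> real \<Rightarrow> nat \<Rightarrow> real" where
  "hh M s n = huff M s (int n + 1)"

lemma hh_eq: "hh M s n = (if n = 0 then 1 else if n \<le> M then 2 * s * fibp s (int n)
   else if n = M + 1 then s * fibp s (int M + 1) - 2 * fibp s (int M)
   else if n \<le> 2*M+1 then 2 * s * fibp s (int n - 2 * int M - 2)
   else if n = 2*M+2 then -1 else 0)"
  unfolding hh_def huff_def Let_def by (auto simp: algebra_simps)


lemma coeff_quad: "coeff ([:a,b,c:] * p) n = a*coeff p n + (if n\<ge>1 then b*coeff p (n-1) else 0) + (if n\<ge>2 then c*coeff p (n-2) else 0)"
  by (cases n; cases "n - 1") (auto simp: coeff_pCons algebra_simps split: nat.splits)

definition HP :: "nat \<Rightarrow> real \<Rightarrow> real poly" where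
  "HP M s = Abs_poly (\<lambda>i. if i \<le> 2*M+2 then hh M s i else 0)"

lemma coeff_HP: "coeff (HP M s) i = hh M s i"
  unfolding HP_def coeff_Abs_poly_If_le by (auto simp: hh_eq)

definition al :: "nat \<Rightarrow> real \<Rightarrow> real" where
  "al M s = -(s*fibp s (int M+1) + 2*fibp s (int M))"

definition gg :: "nat \<Rightarrow> real \<Rightarrow> nat \<Rightarrow> real" where
  "gg M s i = (if i = 0 then 1 else if i = M+1 then al M s else if i = 2*M+2 then -1 else 0)"

definition GP :: "nat \<Rightarrow> real \<Rightarrow> real poly" where
  "GP M s = Abs_poly (\<lambda>i. if i \<le> 2*M+2 then gg M s i else 0)"

lemma coeff_GP: "coeff (GP M s) i = gg M s i"
  unfolding GP_def coeff_Abs_poly_If_le by (auto simp: gg_def)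

lemma fibp_negM: "even M \<Longrightarrow> fibp s (- int M) = - fibp s (int M)"
  using fibp_neg[of s M] by (simp add: fibp_nat)

lemma fibp_1M: "even M \<Longrightarrow> M \<ge> 1 \<Longrightarrow> fibp s (1 - int M) = fibp s (int M - 1)"
proof -
  assume "even M" "M \<ge> 1"
  then have a: "1 - int M = - int (M - 1)" "int M - 1 = int (M-1)" by auto
  have "odd (M - 1)" using \<open>even M\<close> \<open>M \<ge> 1\<close> by simp
  then show ?thesis unfolding a fibp_neg fibp_nat by simp
qed

lemma fibp_small: "fibp s 0 = 0" "fibp s 1 = 1" "fibp s 2 = s" "fibp s (-1) = 1" "fibp s (-2) = -s"
  by (simp_all add: fibp_def eval_nat_numeral)

lemma key_coeff:
  assumes "even M" "M \<ge> 2"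
  shows "hh M s (k+2) - s * hh M s (k+1) - hh M s k = gg M s (k+2) + s * gg M s (k+1) - gg M s k"
proof -
  have r1: "fibp s (int M + 1) = s * fibp s (int M) + fibp s (int M - 1)"
    using fibp_rec[of s "int M - 1"] by (simp add: add.commute)
  consider "k = 0" | "1 \<le> k \<and> k \<le> M - 2" | "k = M - 1" | "k = M" | "k = M + 1"
    | "M + 2 \<le> k \<and> k \<le> 2*M - 1" | "k = 2*M" | "k = 2*M+1" | "k = 2*M+2" | "k > 2*M+2"
    using assms by linarith
  then show ?thesis
  proof cases
    case 1 then show ?thesis using assms by (simp add: hh_eq gg_def fibp_small)
  next
    case 2 then have "1 \<le> k" "k + 2 \<le> M" using assms by auto
    then show ?thesis using assms fibp_rec[of s "int k"] by (simp add: hh_eq gg_def algebra_simps)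
  next
    case 3 then have "k + 1 = M" "1 \<le> k" "\<not> k \<le> 0" "int M - 1 = int k" using assms by auto
    then show ?thesis using assms r1 by (simp add: hh_eq gg_def al_def algebra_simps of_nat_diff)
  next
    case 4 then show ?thesis using assms r1 fibp_negM[of M s] by (simp add: hh_eq gg_def al_def algebra_simps)
  next
    case 5 then show ?thesis using assms r1 fibp_negM[of M s] fibp_1M[of M s] by (simp add: hh_eq gg_def al_def algebra_simps)
  next
    case 6 then have "M + 2 \<le> k" "k + 1 \<le> 2*M" "Suc k \<le> M * 2" using assms by auto
    then show ?thesis using assms fibp_rec[of s "int k - 2 * int M - 2"] by (simp add: hh_eq gg_def algebra_simps)
  next
    case 7 then show ?thesis using assms fibp_small by (simp add: hh_eq gg_def algebra_simps)
  next
    case 8 then show ?thesis using assms fibp_small by (simp add: hh_eq gg_def algebra_simps)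
  next
    case 9 then show ?thesis using assms fibp_small by (simp add: hh_eq gg_def algebra_simps)
  next
    case 10 then show ?thesis using assms by (simp add: hh_eq gg_def algebra_simps)
  qed
qed


lemma polyid:
  assumes "even M" "M \<ge> 2"
  shows "[:1,-s,-1:] * HP M s = [:1,s,-1:] * GP M s"
proof (rule poly_eqI)
  fix n
  show "coeff ([:1,-s,-1:] * HP M s) n = coeff ([:1,s,-1:] * GP M s) n"
  proof (cases n)
    case 0 then show ?thesis by (simp add: coeff_quad coeff_HP coeff_GP hh_eq gg_def)
  next
    case (Suc m)
    show ?thesis
    proof (cases m)
      case 0 then show ?thesis using Suc assms by (simp add: coeff_quad coeff_HP coeff_GP hh_eq gg_def fibp_small)
    next
      case (Suc k)
      then show ?thesis using \<open>n = Suc m\<close> key_coeff[OF assms, of s k]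
        by (simp add: coeff_quad coeff_HP coeff_GP algebra_simps)
    qed
  qed
qed

lemma degree_HP: "degree (HP M s) = 2*M+2"
proof (rule antisym)
  show "degree (HP M s) \<le> 2*M+2" by (rule degree_le) (auto simp: coeff_HP hh_eq)
  show "2*M+2 \<le> degree (HP M s)" by (rule le_degree) (auto simp: coeff_HP hh_eq)
qed

lemma degree_GP: "M \<ge> 1 \<Longrightarrow> degree (GP M s) = 2*M+2"
proof (rule antisym)
  show "degree (GP M s) \<le> 2*M+2" by (rule degree_le) (auto simp: coeff_GP gg_def)
  assume "M \<ge> 1"
  then show "2*M+2 \<le> degree (GP M s)" by (intro le_degree) (auto simp: coeff_GP gg_def)
qed

lemma coeff_RH: "coeff (reflect_poly (HP M s)) j = (if j \<le> 2*M+2 then hh M s (2*M+2-j) else 0)"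
  by (auto simp: coeff_reflect_poly degree_HP coeff_HP)

lemma GP_eq: "M \<ge> 1 \<Longrightarrow> GP M s = [:1:] + monom (al M s) (M+1) - monom 1 (2*M+2)"
  by (rule poly_eqI) (auto simp: coeff_GP gg_def coeff_monom coeff_pCons split: nat.split)

lemma RG_eq: "M \<ge> 1 \<Longrightarrow> reflect_poly (GP M s) = [:-1:] + monom (al M s) (M+1) + monom 1 (2*M+2)"
  by (rule poly_eqI) (auto simp: coeff_reflect_poly degree_GP coeff_GP gg_def coeff_monom coeff_pCons split: nat.split)

lemma refl_quad: "c \<noteq> 0 \<Longrightarrow> a \<noteq> 0 \<Longrightarrow> reflect_poly [:a,b,c::real:] = [:c,b,a:]"
  by (simp add: reflect_poly_def)

lemma prodid:
  assumes "even M" "M \<ge> 2"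
  shows "HP M s * reflect_poly (HP M s) = GP M s * reflect_poly (GP M s)"
proof -
  define A where "A = [:1,-s,-1::real:]"
  define B where "B = [:1,s,-1::real:]"
  have 1: "A * HP M s = B * GP M s" using polyid[OF assms] by (simp add: A_def B_def)
  have "reflect_poly (A * HP M s) = reflect_poly (B * GP M s)" using 1 by simp
  then have "reflect_poly A * reflect_poly (HP M s) = reflect_poly B * reflect_poly (GP M s)"
    by (simp add: reflect_poly_mult)
  moreover have "reflect_poly A = - B" "reflect_poly B = - A"
    by (simp_all add: A_def B_def refl_quad)
  ultimately have 2: "B * reflect_poly (HP M s) = A * reflect_poly (GP M s)" by simp
  have "(A * B) * (HP M s * reflect_poly (HP M s)) = (A * HP M s) * (B * reflect_poly (HP M s))"
    by (simp add: algebra_simps)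
  also have "\<dots> = (B * GP M s) * (A * reflect_poly (GP M s))" using 1 2 by simp
  also have "\<dots> = (A * B) * (GP M s * reflect_poly (GP M s))" by (simp add: algebra_simps)
  moreover have "coeff (A * B) 0 = 1" by (simp add: A_def B_def coeff_mult_0)
  then have "A * B \<noteq> 0" by auto
  ultimately show ?thesis by simp
qed

lemma coeff_2mult: "coeff ((2::real poly) * p) n = 2 * coeff p n"
  by (simp only: mult_2 coeff_add)

lemma GG_coeff:
  assumes "M \<ge> 1"
  shows "coeff (GP M s * reflect_poly (GP M s)) n =
    (if n = 0 then -1 else if n = 2*M+2 then 2 + (al M s)^2 else if n = 4*M+4 then -1 else 0)"
proof -
  have e: "GP M s * reflect_poly (GP M s) = [:-1:] + monom (2 + (al M s)^2) (2*M+2) - monom 1 (4*M+4)"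
    unfolding RG_eq[OF assms] apply (subst GP_eq[OF assms])
    apply (simp add: ring_distribs mult_monom)
    apply (rule poly_eqI)
    using assms by (auto simp: coeff_monom power2_eq_square coeff_2mult)
  show ?thesis unfolding e using assms by (auto simp: coeff_monom coeff_pCons split: nat.split)
qed


lemma huff_zero: "k < 1 \<or> k > 2*int M + 3 \<Longrightarrow> huff M s k = 0"
  by (auto simp: huff_def Let_def)

lemma hh_zero: "i > 2*M+2 \<Longrightarrow> hh M s i = 0"
  by (simp add: hh_eq)

lemma autocorr_sum:
  "autocorr (huff M s) (2*int M+3) d = (\<Sum>i<2*M+3. hh M s i * huff M s (int i + 1 + d))"
  unfolding autocorr_def
  by (rule sum.reindex_bij_witness[of _ "\<lambda>i. int i + 1" "\<lambda>a. nat (a - 1)"]) (auto simp: hh_def)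

lemma coeff_prod:
  assumes "\<bar>d\<bar> \<le> 2*int M+2"
  shows "coeff (HP M s * reflect_poly (HP M s)) (nat (2*int M+2-d)) = (\<Sum>i<2*M+3. hh M s i * huff M s (int i + 1 + d))"
proof -
  define n where "n = nat (2*int M+2-d)"
  define f where "f i = hh M s i * huff M s (int i + 1 + d)" for i
  have "coeff (HP M s * reflect_poly (HP M s)) n = (\<Sum>i\<le>n. coeff (HP M s) i * coeff (reflect_poly (HP M s)) (n - i))"
    by (simp add: coeff_mult)
  also have "\<dots> = (\<Sum>i\<le>n. f i)"
  proof (rule sum.cong[OF refl])
    fix i assume "i \<in> {..n}"
    then have i: "i \<le> n" by simp
    show "coeff (HP M s) i * coeff (reflect_poly (HP M s)) (n - i) = f i"
    proof (cases "n - i \<le> 2*M+2")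
      case True
      then have "int (2*M+2-(n-i)) + 1 = int i + 1 + d" using i assms unfolding n_def by auto
      then have e: "hh M s (2*M+2-(n-i)) = huff M s (int i + 1 + d)" unfolding hh_def
        by (rule arg_cong[where f="huff M s"])
      show ?thesis using True e by (simp add: coeff_RH coeff_HP f_def hh_def)
    next
      case False
      then have "int i + 1 + d < 1" using i assms unfolding n_def by auto
      then show ?thesis using False by (simp add: coeff_RH coeff_HP f_def huff_zero)
    qed
  qed
  also have "\<dots> = (\<Sum>i<4*M+5. f i)"
  proof (rule sum.mono_neutral_left)
    show "{..n} \<subseteq> {..<4*M+5}" using assms unfolding n_def by auto
    show "\<forall>i\<in>{..<4 * M + 5} - {..n}. f i = 0"
    proof
      fix i assume "i \<in> {..<4 * M + 5} - {..n}"
      then have "int i + 1 + d > 2*int M+3" using assms unfolding n_def by auto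
      then show "f i = 0" by (simp add: f_def huff_zero)
    qed
  qed auto
  also have "\<dots> = (\<Sum>i<2*M+3. f i)"
    by (rule sum.mono_neutral_right) (auto simp: f_def hh_zero)
  finally show ?thesis unfolding n_def f_def .
qed

lemma autocorr_G:
  assumes "even M" "M \<ge> 2" "\<bar>d\<bar> \<le> 2*int M+2"
  shows "autocorr (huff M s) (2*int M+3) d = coeff (GP M s * reflect_poly (GP M s)) (nat (2*int M+2-d))"
  unfolding autocorr_sum coeff_prod[OF assms(3), symmetric] prodid[OF assms(1,2)] ..

theorem mainTheorem1:
  fixes M :: nat and s :: real
  assumes "even M" and "M \<ge> 2"
  defines "N \<equiv> 2 * int M + 3"
  shows "(\<forall>d. 0 < \<bar>d\<bar> \<and> \<bar>d\<bar> < N - 1 \<longrightarrow> autocorr (huff M s) N d = 0)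
       \<and> autocorr (huff M s) N (N - 1) = -1
       \<and> autocorr (huff M s) N (-(N - 1)) = -1"
proof (intro conjI allI impI)
  have M1: "M \<ge> 1" using assms by simp
  fix d :: int assume d: "0 < \<bar>d\<bar> \<and> \<bar>d\<bar> < N - 1"
  then have "nat (2*int M+2-d) \<noteq> 0" "nat (2*int M+2-d) \<noteq> 2*M+2" "nat (2*int M+2-d) \<noteq> 4*M+4"
    unfolding N_def by auto
  then show "autocorr (huff M s) N d = 0"
    unfolding N_def using d autocorr_G[OF assms(1,2), of d s] GG_coeff[OF M1, of s]
    unfolding N_def by simp
next
  have M1: "M \<ge> 1" using assms by simp
  show "autocorr (huff M s) N (N - 1) = -1"
    unfolding N_def using autocorr_G[OF assms(1,2), of "2*int M+2" s] GG_coeff[OF M1, of s] by (simp add: add.commute)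
  have "nat (2*int M+2-(-(2*int M+2))) = 4*M+4" by simp
  then show "autocorr (huff M s) N (-(N - 1)) = -1"
    unfolding N_def using autocorr_G[OF assms(1,2), of "-(2*int M+2)" s] GG_coeff[OF M1, of s]
    by (simp add: algebra_simps)
qed

end
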